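(* Consider $n\ge 2$ agents in $\mathbb{R}^d$ ($d\ge 2$) with undirected graph $\mathcal{G}=(\mathcal{V},\mathcal{E})$, desired bearings $\{g_{ij}^*\}_{(i,j)\in\mathcal{E}}$, leaders $\mathcal{V}_\ell=\{1,\dots,n_\ell\}$ and followers $\mathcal{V}_f=\{n_\ell+1,\dots,n\}$ (with $n_f=n-n_\ell$), and suppose the standing assumption below holds. Let $\mathcal{L}_{ff}$ be the follower–follower block of the bearing Laplacian. Then for all $k_P>0$ and $k_I>0$ the matrix $$A=\begin{bmatrix}-k_P\mathcal{L}_{ff} & -k_I I_{dn_f}\\ \mathcal{L}_{ff} & 0\end{bmatrix}\in\mathbb{R}^{2dn_f\times 2dn_f}$$ is Hurwitz (all its eigenvalues have negative real part).
   Context: For nonzero $x\in\mathbb{R}^d$, $P_x=I_d-\frac{xx^T}{\|x\|^2}$. The bearing Laplacian $\mathcal{L}\in\mathbb{R}^{dn\times dn}$ has $(i,j)$-th $d\times d$ block $0$ if $i\ne j,(i,j)\notin\mathcal{E}$; $-P_{g_{ij}^*}$ if $i\ne j,(i,j)\in\mathcal{E}$; $\sum_{k\in\mathcal{N}_i}P_{g_{ik}^*}$ if $i=j$ (where $\mathcal{N}_i$ is the neighbor set of $i$). $\mathcal{L}_{ff}$ is its lower-right $dn_f\times dn_f$ block (rows and columns of followers). Infinitesimal bearing rigidity: for $p=[p_1^T,\dots,p_n^T]^T$ with no two $p_i$ coinciding, orient each edge of $\mathcal{G}$, let $g_k=(p_j-p_i)/\|p_j-p_i\|$ for the $k$-th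 oriented edge $(i,j)$, $F_B(p)=[g_1^T,\dots,g_m^T]^T$, and $R_B(p)=\partial F_B/\partial p\in\mathbb{R}^{dm\times dn}$; the formation $\mathcal{G}(p)$ is infinitesimally bearing rigid if $\mathrm{Null}(R_B(p))=\mathrm{span}\{\mathbf{1}_n\otimes I_d,\,p\}$ (i.e. all infinitesimal bearing motions are translations and scalings). Standing assumption: there is a configuration $p^*$ with $(p_j^*-p_i^* )/\|p_j^*-p_i^*\|=g_{ij}^*$ for all $(i,j)\in\mathcal{E}$ (the target formation, whose leader positions coincide with the actual leader positions), this formation $\mathcal{G}(p^* )$ is infinitesimally bearing rigid, and there are at least two leaders ($n_\ell\ge2$). Under this assumption $\mathcal{L}_{ff}$ is symmetric positive definite. *)

theory Defs
  imports Complex_Main "Jordan_Normal_Form.Char_Poly"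
begin

text \<open>Conventions: agents are indexed 0..n-1, coordinates 0..d-1. A configuration is
  p :: nat => nat => real with p i c the c-th coordinate of agent i.
  Leaders are agents 0..nl-1, followers nl..n-1. The stacked vector index of
  (agent i, coordinate c) is i*d + c.\<close>

definition sqnorm :: "nat \<Rightarrow> (nat \<Rightarrow> real) \<Rightarrow> real" where
  "sqnorm d x = (\<Sum>c<d. (x c)^2)"

definition proj :: "nat \<Rightarrow> (nat \<Rightarrow> real) \<Rightarrow> nat \<Rightarrow> nat \<Rightarrow> real" where
  "proj d x a b = (if a = b then 1 else 0) - x a * x b / sqnorm d x"

definition bearing :: "nat \<Rightarrow> (nat \<Rightarrow> nat \<Rightarrow> real) \<Rightarrow> nat \<Rightarrow> nat \<Rightarrow> nat \<Rightarrow> real" where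
  "bearing d p i j c = (p j c - p i c) / sqrt (sqnorm d (\<lambda>a. p j a - p i a))"

definition undirected_graph :: "nat \<Rightarrow> (nat \<times> nat) set \<Rightarrow> bool" where
  "undirected_graph n E \<longleftrightarrow> E \<subseteq> {0..<n} \<times> {0..<n} \<and> (\<forall>i j. (i,j) \<in> E \<longrightarrow> (j,i) \<in> E)
     \<and> (\<forall>i. (i,i) \<notin> E)"

definition no_coinciding :: "nat \<Rightarrow> nat \<Rightarrow> (nat \<Rightarrow> nat \<Rightarrow> real) \<Rightarrow> bool" where
  "no_coinciding n d p \<longleftrightarrow> (\<forall>i<n. \<forall>j<n. i \<noteq> j \<longrightarrow> (\<exists>c<d. p i c \<noteq> p j c))"

text \<open>Infinitesimal bearing rigidity: Null(R_B(p)) = span{1 (x) I_d, p}.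
  A perturbation v lies in Null(R_B(p)) iff R_B(p) v = 0, i.e. iff the directional
  derivative at t = 0 of every bearing component along p + t v vanishes (chain rule).
  Both orientations of every edge are included; this does not change the null space
  since g_ji = - g_ij.\<close>
definition inf_bearing_rigid :: "nat \<Rightarrow> nat \<Rightarrow> (nat \<times> nat) set \<Rightarrow> (nat \<Rightarrow> nat \<Rightarrow> real) \<Rightarrow> bool" where
  "inf_bearing_rigid n d E p \<longleftrightarrow>
     (\<forall>v :: nat \<Rightarrow> nat \<Rightarrow> real.
        (\<forall>(i,j)\<in>E. \<forall>c<d.
            ((\<lambda>t. bearing d (\<lambda>k a. p k a + t * v k a) i j c) has_real_derivative 0) (at 0))
        \<longleftrightarrow> (\<exists>(a :: nat \<Rightarrow> real) (s :: real). \<forall>i<n. \<forall>c<d. v i c = a c + s * p i c))"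

definition bearing_laplacian ::
  "nat \<Rightarrow> nat \<Rightarrow> (nat \<times> nat) set \<Rightarrow> (nat \<Rightarrow> nat \<Rightarrow> nat \<Rightarrow> real) \<Rightarrow> real mat" where
  "bearing_laplacian n d E g = mat (d*n) (d*n) (\<lambda>(r,s).
     let i = r div d; a = r mod d; j = s div d; b = s mod d in
     if i = j then (\<Sum>k\<in>{k. (i,k) \<in> E}. proj d (g i k) a b)
     else if (i,j) \<in> E then - proj d (g i j) a b else 0)"

definition L_ff :: "nat \<Rightarrow> nat \<Rightarrow> nat \<Rightarrow> (nat \<times> nat) set \<Rightarrow> (nat \<Rightarrow> nat \<Rightarrow> nat \<Rightarrow> real) \<Rightarrow> real mat" where
  "L_ff n nl d E g = mat (d*(n-nl)) (d*(n-nl))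
     (\<lambda>(r,s). bearing_laplacian n d E g $$ (r + d*nl, s + d*nl))"

definition hurwitz :: "real mat \<Rightarrow> bool" where
  "hurwitz A \<longleftrightarrow> (\<forall>z. eigenvalue (map_mat complex_of_real A) z \<longrightarrow> Re z < 0)"

end

theory Submission imports Defs begin

lemma sqnorm_cong: "(\<And>c. c < d \<Longrightarrow> x c = y c) \<Longrightarrow> sqnorm d x = sqnorm d y"
  unfolding sqnorm_def by (intro sum.cong) auto

lemma proj_cong: "(\<And>c. c < d \<Longrightarrow> x c = y c) \<Longrightarrow> a < d \<Longrightarrow> b < d \<Longrightarrow> proj d x a b = proj d y a b"
  unfolding proj_def using sqnorm_cong[of d x y] by simp

lemma proj_neg: "(\<And>c. c < d \<Longrightarrow> y c = - x c) \<Longrightarrow> a < d \<Longrightarrow> b < d \<Longrightarrow> proj d y a b = proj d x a b"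
proof -
  assume h: "\<And>c. c < d \<Longrightarrow> y c = - x c" and ab: "a < d" "b < d"
  have "sqnorm d y = sqnorm d x" unfolding sqnorm_def using h by (intro sum.cong) auto
  thus ?thesis unfolding proj_def using h ab by simp
qed

lemma proj_sym: "proj d x a b = proj d x b a"
  unfolding proj_def by (simp add: mult.commute)

lemma qf_proj:
  assumes S: "sqnorm d x > 0"
  shows "(\<Sum>a<d. \<Sum>b<d. w a * proj d x a b * w b)
       = (\<Sum>a<d. (w a - ((\<Sum>c<d. x c * w c) / sqnorm d x) * x a)^2)"
proof -
  define S' where "S' = sqnorm d x"
  define X where "X = (\<Sum>c<d. x c * w c)"
  have "(\<Sum>a<d. \<Sum>b<d. w a * proj d x a b * w b)
      = (\<Sum>a<d. \<Sum>b<d. (if a = b then w a * w b else 0) - (x a * w a) * (x b * w b) / S')"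
    unfolding proj_def S'_def by (intro sum.cong refl) (auto simp: algebra_simps)
  also have "\<dots> = (\<Sum>a<d. \<Sum>b<d. (if a = b then w a * w b else 0)) - (\<Sum>a<d. \<Sum>b<d. (x a * w a) * (x b * w b)) / S'"
    by (simp add: sum_subtractf sum_divide_distrib)
  also have "(\<Sum>a<d. \<Sum>b<d. (if a = b then w a * w b else 0)) = (\<Sum>a<d. (w a)^2)"
    by (simp add: power2_eq_square)
  also have "(\<Sum>a<d. \<Sum>b<d. (x a * w a) * (x b * w b)) = X * X"
    unfolding X_def by (simp add: sum_product)
  finally have lhs: "(\<Sum>a<d. \<Sum>b<d. w a * proj d x a b * w b) = (\<Sum>a<d. (w a)^2) - X * X / S'" .
  have "(\<Sum>a<d. (w a - (X / S') * x a)^2) = (\<Sum>a<d. (w a)^2 - 2 * (X/S') * (x a * w a) + (X/S')^2 * (x a)^2)"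
    by (intro sum.cong refl) (simp add: power2_eq_square algebra_simps)
  also have "\<dots> = (\<Sum>a<d. (w a)^2) - 2 * (X/S') * X + (X/S')^2 * S'"
    unfolding X_def S'_def sqnorm_def by (simp add: sum.distrib sum_subtractf sum_distrib_left)
  also have "\<dots> = (\<Sum>a<d. (w a)^2) - X * X / S'"
    using S unfolding S'_def by (simp add: power2_eq_square field_simps)
  finally show ?thesis using lhs unfolding X_def S'_def by simp
qed

lemma sum_blocks: "(\<Sum>r<d*N. f r) = (\<Sum>i<N. \<Sum>a<d. f (i*d+a :: nat))"
proof (induction N)
  case 0 thus ?case by simp
next
  case (Suc N)
  have "(\<Sum>r<d*Suc N. f r) = (\<Sum>r\<in>{0..<d*N}. f r) + (\<Sum>r\<in>{d*N..<d*N+d}. f r)"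
    by (simp add: atLeast0LessThan[symmetric] sum.atLeastLessThan_concat add.commute)
  also have "(\<Sum>r\<in>{d*N..<d*N+d}. f r) = (\<Sum>a\<in>{0..<d}. f (N*d+a))"
    using sum.shift_bounds_nat_ivl[of f 0 "d*N" d] by (simp add: add.commute mult.commute)
  finally show ?case using Suc by (simp add: atLeast0LessThan)
qed

lemma eventually_pos: "eventually (\<lambda>t::real. 1 + t * s > 0) (nhds 0)"
proof -
  have "((\<lambda>t::real. 1 + t * s) \<longlongrightarrow> 1 + 0 * s) (nhds 0)"
    by (intro tendsto_intros filterlim_ident)
  thus ?thesis by (rule order_tendstoD) simp
qed

lemma bearing_deriv_zero:
  assumes S: "sqnorm d (\<lambda>a. p j a - p i a) > 0" and c: "c < d"
    and par: "\<And>c. c < d \<Longrightarrow> v j c - v i c = s * (p j c - p i c)"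
  shows "((\<lambda>t. bearing d (\<lambda>k a. p k a + t * v k a) i j c) has_real_derivative 0) (at 0)"
proof -
  define e where "e a = p j a - p i a" for a
  have eq: "bearing d (\<lambda>k a. p k a + t * v k a) i j c = e c / sqrt (sqnorm d e)" if t: "1 + t * s > 0" for t
  proof -
    have pt: "p j a + t * v j a - (p i a + t * v i a) = (1 + t*s) * e a" if a: "a < d" for a
    proof -
      have h: "v j a = v i a + s * (p j a - p i a)" using par[OF a] by linarith
      show ?thesis unfolding h e_def by (simp add: algebra_simps)
    qed
    have "sqnorm d (\<lambda>a. p j a + t * v j a - (p i a + t * v i a)) = sqnorm d (\<lambda>a. (1 + t*s) * e a)"
      by (rule sqnorm_cong) (rule pt)
    also have "\<dots> = (1 + t*s)^2 * sqnorm d e"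
      unfolding sqnorm_def by (simp add: sum_distrib_left power_mult_distrib)
    finally have sq: "sqnorm d (\<lambda>a. p j a + t * v j a - (p i a + t * v i a)) = (1 + t*s)^2 * sqnorm d e" .
    have num: "p j c + t * v j c - (p i c + t * v i c) = (1 + t*s) * e c"
      by (rule pt[OF c])
    show ?thesis unfolding bearing_def sq num using t by (simp add: real_sqrt_mult)
  qed
  have "((\<lambda>t::real. e c / sqrt (sqnorm d e)) has_real_derivative 0) (at 0)"
    by (rule DERIV_const)
  moreover have "eventually (\<lambda>t. bearing d (\<lambda>k a. p k a + t * v k a) i j c = e c / sqrt (sqnorm d e)) (nhds 0)"
    using eventually_pos[of s] by eventually_elim (rule eq)
  ultimately show ?thesis
    using DERIV_cong_ev[of 0 0 "\<lambda>t. bearing d (\<lambda>k a. p k a + t * v k a) i j c" "\<lambda>t. e c / sqrt (sqnorm d e)" 0 0] by simp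
qed


lemma bearing_swap: "bearing d p j i c = - bearing d p i j c"
proof -
  have "sqnorm d (\<lambda>a. p i a - p j a) = sqnorm d (\<lambda>a. p j a - p i a)"
    unfolding sqnorm_def by (intro sum.cong refl) (simp add: power2_commute)
  thus ?thesis unfolding bearing_def by (simp add: minus_divide_left)
qed

lemma sum_from: fixes f :: "nat \<Rightarrow> 'a::comm_monoid_add" shows "(\<And>i. i < l \<Longrightarrow> f i = 0) \<Longrightarrow> l \<le> n \<Longrightarrow> (\<Sum>i<n. f i) = (\<Sum>i\<in>{l..<n}. f i)"
proof -
  assume z: "\<And>i. i < l \<Longrightarrow> f i = 0" and l: "l \<le> n"
  have "(\<Sum>i<n. f i) = (\<Sum>i\<in>{0..<l}. f i) + (\<Sum>i\<in>{l..<n}. f i)"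
    using l by (simp add: atLeast0LessThan[symmetric] sum.atLeastLessThan_concat)
  thus ?thesis using z by simp
qed

lemma sum_shift: fixes f :: "nat \<Rightarrow> 'a::comm_monoid_add" shows "nl \<le> n \<Longrightarrow> (\<Sum>i\<in>{nl..<n}. f i) = (\<Sum>i<n-nl. f (i+nl))"
  using sum.shift_bounds_nat_ivl[of f 0 nl "n-nl"] by (simp add: atLeast0LessThan)

lemma idx_lt: "i < N \<Longrightarrow> a < (d::nat) \<Longrightarrow> i*d + a < d*N"
proof -
  assume "i < N" "a < d"
  hence "i*d + a < (i+1)*d" by simp
  also have "\<dots> \<le> N*d" using \<open>i < N\<close> by (intro mult_right_mono) auto
  finally show ?thesis by (simp add: mult.commute)
qed

definition Lb :: "nat \<Rightarrow> (nat \<times> nat) set \<Rightarrow> (nat \<Rightarrow> nat \<Rightarrow> nat \<Rightarrow> real) \<Rightarrow> nat \<Rightarrow> nat \<Rightarrow> nat \<Rightarrow> nat \<Rightarrow> real" where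
  "Lb d E g i j a b = (if i = j then (\<Sum>k\<in>{k. (i,k) \<in> E}. proj d (g i k) a b)
     else if (i,j) \<in> E then - proj d (g i j) a b else 0)"

lemma Lff_dim: "L_ff n nl d E g \<in> carrier_mat (d*(n-nl)) (d*(n-nl))"
  unfolding L_ff_def by simp

lemma Lff_entry:
  assumes "0 < d" "r < d*(n-nl)" "s < d*(n-nl)" "nl \<le> n"
  shows "L_ff n nl d E g $$ (r,s) = Lb d E g (r div d + nl) (s div d + nl) (r mod d) (s mod d)"
proof -
  have "d*(n-nl) + d*nl = d*n" using assms(4) by (simp add: add_mult_distrib2[symmetric])
  hence lt: "r + d*nl < d*n" "s + d*nl < d*n" using assms by linarith+
  have dv: "(r + d*nl) div d = r div d + nl" "(r + d*nl) mod d = r mod d"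
           "(s + d*nl) div d = s div d + nl" "(s + d*nl) mod d = s mod d"
    using assms(1) by (simp_all add: mult.commute)
  show ?thesis unfolding L_ff_def bearing_laplacian_def Lb_def
    using assms lt dv by (simp add: Let_def add.commute)
qed


lemma Lb_sym:
  assumes Esym: "\<And>i j. (i,j)\<in>E \<Longrightarrow> (j,i)\<in>E"
    and gE: "\<And>i j c. (i,j)\<in>E \<Longrightarrow> c < d \<Longrightarrow> g i j c = bearing d p i j c"
    and ab: "a < d" "b < d"
  shows "Lb d E g i j a b = Lb d E g j i b a"
proof (cases "i = j")
  case True thus ?thesis unfolding Lb_def by (simp add: proj_sym)
next
  case False
  show ?thesis
  proof (cases "(i,j) \<in> E")
    case True
    hence ji: "(j,i) \<in> E" by (rule Esym)
    have "proj d (g j i) b a = proj d (g i j) b a"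
    proof (rule proj_neg)
      fix c assume c: "c < d"
      show "g j i c = - g i j c" using gE[OF ji c] gE[OF True c] bearing_swap[of d p j i c] by simp
    qed (use ab in auto)
    thus ?thesis unfolding Lb_def using False True ji by (simp add: proj_sym)
  next
    case False2: False
    hence "(j,i) \<notin> E" using Esym by blast
    thus ?thesis unfolding Lb_def using False False2 by simp
  qed
qed

lemma Lff_pd:
  fixes n d nl :: nat and E and g and p :: "nat \<Rightarrow> nat \<Rightarrow> real" and u :: "nat \<Rightarrow> real"
  assumes d: "d > 0" and G: "undirected_graph n E" and nl2: "2 \<le> nl" and nln: "nl \<le> n"
    and nc: "no_coinciding n d p" and gdef: "\<forall>(i,j)\<in>E. \<forall>c<d. g i j c = bearing d p i j c"
    and rig: "inf_bearing_rigid n d E p"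
    and ex: "\<exists>r<d*(n-nl). u r \<noteq> 0"
  shows "(\<Sum>r<d*(n-nl). \<Sum>s<d*(n-nl). u r * L_ff n nl d E g $$ (r,s) * u s) > 0"
proof -
  define nf where "nf = n - nl"
  define N where "N i = {k. (i,k) \<in> E}" for i
  define z where "z i a = (if nl \<le> i \<and> i < n \<and> a < d then u ((i - nl)*d + a) else 0)" for i a
  define P where "P i k a b = proj d (g i k) a b" for i k a b
  have Esub: "E \<subseteq> {0..<n} \<times> {0..<n}" and Esym: "\<And>i j. (i,j)\<in>E \<Longrightarrow> (j,i)\<in>E"
    and Eirr: "\<And>i. (i,i) \<notin> E"
    using G unfolding undirected_graph_def by auto
  have finE: "finite E" using Esub finite_subset by blast
  have Nsub: "N i \<subseteq> {..<n}" for i using Esub unfolding N_def by auto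
  have finN: "finite (N i)" for i using Nsub finite_subset by blast
  have iN: "i \<notin> N i" for i using Eirr unfolding N_def by auto
  have gE: "g i j c = bearing d p i j c" if "(i,j)\<in>E" "c<d" for i j c using gdef that by auto
  have Spos: "sqnorm d (\<lambda>a. p k a - p i a) > 0" if ik: "(i,k)\<in>E" for i k
  proof -
    have "i < n" "k < n" "i \<noteq> k" using ik Esub Eirr by auto
    then obtain c where c: "c<d" "p i c \<noteq> p k c" using nc unfolding no_coinciding_def by blast
    have "(p k c - p i c)^2 > 0" using c by simp
    moreover have "(p k c - p i c)^2 \<le> sqnorm d (\<lambda>a. p k a - p i a)"
      unfolding sqnorm_def using c by (intro member_le_sum[where f="\<lambda>a. (p k a - p i a)^2"]) auto
    ultimately show ?thesis by linarith
  qed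
  have gnorm: "sqnorm d (g i k) = 1" if ik: "(i,k)\<in>E" for i k
  proof -
    have "sqnorm d (g i k) = sqnorm d (bearing d p i k)" by (rule sqnorm_cong) (use gE ik in auto)
    also have "\<dots> = (\<Sum>c<d. (p k c - p i c)^2) / sqnorm d (\<lambda>a. p k a - p i a)"
      unfolding sqnorm_def[of d "bearing d p i k"] bearing_def using Spos[OF ik]
      by (simp add: power_divide sum_divide_distrib)
    also have "\<dots> = 1" using Spos[OF ik] unfolding sqnorm_def by simp
    finally show ?thesis .
  qed
  have Pswap: "P k i a b = P i k a b" if "(i,k)\<in>E" "a<d" "b<d" for i k a b
    unfolding P_def
  proof (rule proj_neg)
    fix c assume c: "c < d"
    show "g k i c = - g i k c" using gE[OF Esym[OF that(1)] c] gE[OF that(1) c] bearing_swap[of d p k i c] by simp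
  qed (use that in auto)
  define Q where "Q i k = (\<Sum>a<d. \<Sum>b<d. z i a * P i k a b * (z i b - z k b))" for i k
  define QF where "QF = (\<Sum>i<n. \<Sum>a<d. \<Sum>j<n. \<Sum>b<d. z i a * Lb d E g i j a b * z j b)"
  let ?L = "L_ff n nl d E g"
  have s1: "(\<Sum>r<d*nf. \<Sum>s<d*nf. u r * ?L $$ (r,s) * u s)
      = (\<Sum>i<nf. \<Sum>a<d. \<Sum>j<nf. \<Sum>b<d. u (i*d+a) * ?L $$ (i*d+a, j*d+b) * u (j*d+b))"
    by (simp add: sum_blocks)
  also have "\<dots> = (\<Sum>i<nf. \<Sum>a<d. \<Sum>j<nf. \<Sum>b<d. z (i+nl) a * Lb d E g (i+nl) (j+nl) a b * z (j+nl) b)"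
  proof (intro sum.cong refl)
    fix i a j b assume "i \<in> {..<nf}" "a \<in> {..<d}" "j \<in> {..<nf}" "b \<in> {..<d}"
    hence h: "i < nf" "a < d" "j < nf" "b < d" by auto
    have lt: "i*d+a < d*(n-nl)" "j*d+b < d*(n-nl)" using idx_lt h unfolding nf_def by auto
    have dv: "(i*d+a) div d = i" "(i*d+a) mod d = a" "(j*d+b) div d = j" "(j*d+b) mod d = b"
      using h by simp_all
    have zz: "z (i+nl) a = u (i*d+a)" "z (j+nl) b = u (j*d+b)"
      using h unfolding z_def nf_def by auto
    show "u (i*d+a) * ?L $$ (i*d+a, j*d+b) * u (j*d+b) = z (i+nl) a * Lb d E g (i+nl) (j+nl) a b * z (j+nl) b"
      using Lff_entry[OF d lt nln] dv zz by simp
  qed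
  also have "\<dots> = (\<Sum>i\<in>{nl..<n}. \<Sum>a<d. \<Sum>j\<in>{nl..<n}. \<Sum>b<d. z i a * Lb d E g i j a b * z j b)"
    by (simp add: sum_shift[OF nln] nf_def)
  also have "\<dots> = QF"
  proof -
    have "(\<Sum>j\<in>{nl..<n}. \<Sum>b<d. z i a * Lb d E g i j a b * z j b) = (\<Sum>j<n. \<Sum>b<d. z i a * Lb d E g i j a b * z j b)" for i a
      by (rule sum_from[symmetric]) (auto simp: z_def nln)
    hence "(\<Sum>i\<in>{nl..<n}. \<Sum>a<d. \<Sum>j\<in>{nl..<n}. \<Sum>b<d. z i a * Lb d E g i j a b * z j b)
        = (\<Sum>i\<in>{nl..<n}. \<Sum>a<d. \<Sum>j<n. \<Sum>b<d. z i a * Lb d E g i j a b * z j b)" by simp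
    also have "\<dots> = QF" unfolding QF_def
      by (rule sum_from[symmetric]) (auto simp: z_def nln)
    finally show ?thesis .
  qed
  finally have s13: "(\<Sum>r<d*nf. \<Sum>s<d*nf. u r * ?L $$ (r,s) * u s) = QF" .
  have inner: "(\<Sum>j<n. Lb d E g i j a b * z j b) = (\<Sum>k\<in>N i. P i k a b * (z i b - z k b))" if i: "i<n" for i a b
  proof -
    have "(\<Sum>j<n. Lb d E g i j a b * z j b) = Lb d E g i i a b * z i b + (\<Sum>j\<in>{..<n}-{i}. Lb d E g i j a b * z j b)"
      using i by (simp add: sum.remove)
    also have "(\<Sum>j\<in>{..<n}-{i}. Lb d E g i j a b * z j b) = (\<Sum>j\<in>{..<n}-{i}. if j \<in> N i then - (P i j a b * z j b) else 0)"
      by (intro sum.cong refl) (auto simp: Lb_def N_def P_def)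
    also have "\<dots> = (\<Sum>j\<in>({..<n}-{i}) \<inter> N i. - (P i j a b * z j b))"
      by (simp add: sum.inter_restrict)
    also have "({..<n}-{i}) \<inter> N i = N i" using Nsub iN by auto
    also have "Lb d E g i i a b = (\<Sum>k\<in>N i. P i k a b)" unfolding Lb_def N_def P_def by simp
    finally show ?thesis by (simp add: sum_distrib_right sum_subtractf right_diff_distrib sum_negf)
  qed
  have s4: "QF = (\<Sum>i<n. \<Sum>k\<in>N i. Q i k)"
    unfolding QF_def
  proof (rule sum.cong[OF refl])
    fix i assume "i \<in> {..<n}"
    hence i: "i < n" by simp
    have "(\<Sum>a<d. \<Sum>j<n. \<Sum>b<d. z i a * Lb d E g i j a b * z j b)
        = (\<Sum>a<d. z i a * (\<Sum>b<d. \<Sum>j<n. Lb d E g i j a b * z j b))"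
    proof (intro sum.cong refl)
      fix a
      show "(\<Sum>j<n. \<Sum>b<d. z i a * Lb d E g i j a b * z j b) = z i a * (\<Sum>b<d. \<Sum>j<n. Lb d E g i j a b * z j b)"
        by (subst sum.swap) (simp add: sum_distrib_left mult.assoc)
    qed
    also have "\<dots> = (\<Sum>a<d. \<Sum>b<d. \<Sum>k\<in>N i. z i a * (P i k a b * (z i b - z k b)))"
      using inner[OF i] by (simp add: sum_distrib_left)
    also have "\<dots> = (\<Sum>a<d. \<Sum>k\<in>N i. \<Sum>b<d. z i a * (P i k a b * (z i b - z k b)))"
      by (rule sum.cong[OF refl]) (rule sum.swap)
    also have "\<dots> = (\<Sum>k\<in>N i. \<Sum>a<d. \<Sum>b<d. z i a * (P i k a b * (z i b - z k b)))"
      by (rule sum.swap)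
    also have "\<dots> = (\<Sum>k\<in>N i. Q i k)" unfolding Q_def by (simp add: mult.assoc)
    finally show "(\<Sum>a<d. \<Sum>j<n. \<Sum>b<d. z i a * Lb d E g i j a b * z j b) = (\<Sum>k\<in>N i. Q i k)" .
  qed
  have s5: "(\<Sum>i<n. \<Sum>k\<in>N i. Q i k) = (\<Sum>(i,k)\<in>E. Q i k)"
  proof -
    have "Sigma {..<n} N = E" using Esub unfolding N_def by auto
    thus ?thesis using sum.Sigma[of "{..<n}" N Q] finN by simp
  qed
  have s6: "(\<Sum>(i,k)\<in>E. Q i k) = (\<Sum>(i,k)\<in>E. Q k i)"
    by (rule sum.reindex_bij_witness[where i="\<lambda>(i,k). (k,i)" and j="\<lambda>(i,k). (k,i)"])
       (auto intro: Esym)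
  define W where "W i k = (\<Sum>a<d. \<Sum>b<d. (z i a - z k a) * proj d (g i k) a b * (z i b - z k b))" for i k
  have s7: "Q i k + Q k i = W i k" if ik: "(i,k)\<in>E" for i k
  proof -
    have "Q k i = (\<Sum>a<d. \<Sum>b<d. z k a * P i k a b * (z k b - z i b))"
      unfolding Q_def by (intro sum.cong refl) (simp add: Pswap[OF ik])
    thus ?thesis unfolding Q_def W_def P_def
      by (simp add: sum.distrib[symmetric] algebra_simps)
  qed
  have two: "2 * QF = (\<Sum>(i,k)\<in>E. W i k)"
  proof -
    have "2 * QF = (\<Sum>(i,k)\<in>E. Q i k) + (\<Sum>(i,k)\<in>E. Q k i)" using s4 s5 s6 by simp
    also have "\<dots> = (\<Sum>(i,k)\<in>E. Q i k + Q k i)" by (simp add: sum.distrib[symmetric] split_def)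
    also have "\<dots> = (\<Sum>(i,k)\<in>E. W i k)" by (intro sum.cong refl) (auto simp: s7)
    finally show ?thesis .
  qed
  define t where "t i k = (\<Sum>c<d. g i k c * (z i c - z k c)) / sqnorm d (g i k)" for i k
  have Wsq: "W i k = (\<Sum>a<d. ((z i a - z k a) - t i k * g i k a)^2)" if ik: "(i,k)\<in>E" for i k
    unfolding W_def t_def using qf_proj[of d "g i k" "\<lambda>a. z i a - z k a"] gnorm[OF ik] by simp
  have Wnn: "W i k \<ge> 0" if "(i,k)\<in>E" for i k using Wsq[OF that] by (simp add: sum_nonneg)
  show ?thesis
  proof (rule ccontr)
    assume "\<not> ?thesis"
    hence "QF \<le> 0" using s13 nf_def by simp
    moreover have "(\<Sum>(i,k)\<in>E. W i k) \<ge> 0" using Wnn by (intro sum_nonneg) auto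
    ultimately have "(\<Sum>(i,k)\<in>E. W i k) = 0" using two by simp
    hence W0: "\<forall>x\<in>E. (case x of (i,k) \<Rightarrow> W i k) = 0"
      using sum_nonneg_eq_0_iff[OF finE, of "\<lambda>(i,k). W i k"] Wnn by auto
    have par: "z k c - z i c = (- t i k / sqrt (sqnorm d (\<lambda>a. p k a - p i a))) * (p k c - p i c)"
      if ik: "(i,k)\<in>E" and c: "c < d" for i k c
    proof -
      have "(\<Sum>a<d. ((z i a - z k a) - t i k * g i k a)^2) = 0" using W0 ik Wsq[OF ik] by auto
      hence "((z i c - z k c) - t i k * g i k c)^2 = 0"
        using sum_nonneg_eq_0_iff[of "{..<d}" "\<lambda>a. ((z i a - z k a) - t i k * g i k a)^2"] c by auto
      hence "z i c - z k c = t i k * g i k c" by simp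
      thus ?thesis using gE[OF ik c] unfolding bearing_def by simp
    qed
    have dz: "((\<lambda>t. bearing d (\<lambda>k a. p k a + t * z k a) i j c) has_real_derivative 0) (at 0)"
      if ij: "(i,j)\<in>E" and c: "c<d" for i j c
      by (rule bearing_deriv_zero[OF Spos[OF ij] c, of z "- t i j / sqrt (sqnorm d (\<lambda>a. p j a - p i a))"])
         (rule par[OF ij])
    have derivs: "\<forall>(i,j)\<in>E. \<forall>c<d.
            ((\<lambda>t. bearing d (\<lambda>k a. p k a + t * z k a) i j c) has_real_derivative 0) (at 0)"
      using dz by blast
    have "\<exists>(a0::nat\<Rightarrow>real) (s0::real). \<forall>i<n. \<forall>c<d. z i c = a0 c + s0 * p i c"
      using rig[unfolded inf_bearing_rigid_def, rule_format, of z] derivs by blast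
    then obtain a0 s0 where rep: "\<And>i c. i < n \<Longrightarrow> c < d \<Longrightarrow> z i c = a0 c + s0 * p i c" by blast
    have n01: "0 < n" "1 < n" using nl2 nln by auto
    obtain c where c: "c < d" "p 0 c \<noteq> p 1 c"
      using nc n01 unfolding no_coinciding_def by fastforce
    have z0: "z 0 c' = 0" "z 1 c' = 0" for c' unfolding z_def using nl2 by auto
    have e0: "a0 c + s0 * p 0 c = 0" "a0 c + s0 * p 1 c = 0"
      using rep[OF n01(1) c(1)] rep[OF n01(2) c(1)] z0 by simp_all
    have "s0 * (p 0 c - p 1 c) = 0" unfolding right_diff_distrib using e0 by linarith
    hence s00: "s0 = 0" using c by simp
    have zall: "z i c' = 0" if "i < n" "c' < d" for i c'
      using rep[OF that] rep[OF n01(1) that(2)] z0 s00 by simp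
    from ex obtain r where r: "r < d*(n-nl)" "u r \<noteq> 0" by blast
    have rd: "r div d < n - nl" using r(1) by (simp add: less_mult_imp_div_less mult.commute)
    have "z (r div d + nl) (r mod d) = u r"
      unfolding z_def using rd d by simp
    moreover have "z (r div d + nl) (r mod d) = 0" using zall rd d by simp
    ultimately show False using r(2) by simp
  qed
qed

lemma hurwitz_block:
  fixes L :: "real mat" and kP kI :: real
  assumes Lc: "L \<in> carrier_mat m m"
    and sym: "\<And>r s. r<m \<Longrightarrow> s<m \<Longrightarrow> L$$(r,s) = L$$(s,r)"
    and pd: "\<And>u. (\<exists>r<m. u r \<noteq> 0) \<Longrightarrow> (\<Sum>r<m. \<Sum>s<m. u r * L$$(r,s) * u s) > 0"
    and kP: "kP>0" and kI: "kI>0"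
  shows "hurwitz (four_block_mat ((-kP) \<cdot>\<^sub>m L) ((-kI) \<cdot>\<^sub>m 1\<^sub>m m) L (0\<^sub>m m m))"
proof -
  let ?A = "four_block_mat ((-kP) \<cdot>\<^sub>m L) ((-kI) \<cdot>\<^sub>m 1\<^sub>m m) L (0\<^sub>m m m)"
  let ?M = "map_mat complex_of_real ?A"
  have dimL: "dim_row L = m" "dim_col L = m" using Lc by auto
  have dimM: "dim_row ?M = m+m" "dim_col ?M = m+m" using Lc by auto
  show ?thesis unfolding hurwitz_def
  proof (intro allI impI)
    fix z assume "eigenvalue ?M z"
    then obtain w where wc: "w \<in> carrier_vec (m+m)" and w0: "w \<noteq> 0\<^sub>v (m+m)" and ev: "?M *\<^sub>v w = z \<cdot>\<^sub>v w"
      unfolding eigenvalue_def eigenvector_def using dimM by auto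
    define x where "x r = w$r" for r
    define y where "y r = w$(m+r)" for r
    define Lx where "Lx r = (\<Sum>s<m. complex_of_real (L$$(r,s)) * x s)" for r
    have split: "(?M *\<^sub>v w)$i = (\<Sum>j<m. ?M$$(i,j) * x j) + (\<Sum>j<m. ?M$$(i,m+j) * y j)" if "i < m+m" for i
    proof -
      have "(?M *\<^sub>v w)$i = (\<Sum>j\<in>{0..<m+m}. ?M$$(i,j) * w$j)"
        using that wc dimM by (simp add: scalar_prod_def)
      also have "\<dots> = (\<Sum>j\<in>{0..<m}. ?M$$(i,j) * w$j) + (\<Sum>j\<in>{m..<m+m}. ?M$$(i,j) * w$j)"
        by (rule sum.atLeastLessThan_concat[symmetric]) auto
      also have "(\<Sum>j\<in>{m..<m+m}. ?M$$(i,j) * w$j) = (\<Sum>j\<in>{0..<m}. ?M$$(i,m+j) * w$(m+j))"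
        using sum.shift_bounds_nat_ivl[of "\<lambda>j. ?M$$(i,j) * w$j" 0 m m] by (simp add: add.commute)
      finally show ?thesis unfolding x_def y_def by (simp add: atLeast0LessThan)
    qed
    have eq1: "- kP * Lx r - kI * y r = z * x r" if r: "r < m" for r
    proof -
      have "(?M *\<^sub>v w)$r = z * x r" using ev r wc unfolding x_def by simp
      moreover have "(\<Sum>j<m. ?M$$(r,j) * x j) = - kP * Lx r"
        using r Lc by (simp add: Lx_def sum_distrib_left mult.assoc)
      moreover have "(\<Sum>j<m. ?M$$(r,m+j) * y j) = - kI * y r"
      proof -
        have "(\<Sum>j<m. ?M$$(r,m+j) * y j) = (\<Sum>j<m. (if j = r then - kI * y j else 0))"
          using r Lc by (intro sum.cong) auto
        also have "\<dots> = - kI * y r" using r by simp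
        finally show ?thesis .
      qed
      ultimately show ?thesis using split[of r] r by simp
    qed
    have eq2: "Lx r = z * y r" if r: "r < m" for r
    proof -
      have "(?M *\<^sub>v w)$(m+r) = z * y r" using ev r wc unfolding y_def by simp
      moreover have "(\<Sum>j<m. ?M$$(m+r,j) * x j) = Lx r"
        using r Lc by (simp add: Lx_def)
      moreover have "(\<Sum>j<m. ?M$$(m+r,m+j) * y j) = 0"
        using r Lc by (intro sum.neutral) auto
      ultimately show ?thesis using split[of "m+r"] r by simp
    qed
    have xnz: "\<exists>r<m. x r \<noteq> 0"
    proof (rule ccontr)
      assume "\<not> (\<exists>r<m. x r \<noteq> 0)"
      hence x0: "\<And>r. r < m \<Longrightarrow> x r = 0" by auto
      have y0: "y r = 0" if "r < m" for r
      proof -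
        have "Lx r = 0" unfolding Lx_def using x0 by simp
        with eq1[OF that] x0[OF that] kI show ?thesis by simp
      qed
      have "w = 0\<^sub>v (m+m)"
      proof (rule eq_vecI)
        fix i assume i: "i < dim_vec (0\<^sub>v (m+m) :: complex vec)"
        show "w $ i = 0\<^sub>v (m+m) $ i"
        proof (cases "i < m")
          case True thus ?thesis using x0[of i] i unfolding x_def by simp
        next
          case False thus ?thesis using y0[of "i-m"] i unfolding y_def by simp
        qed
      qed (use wc in simp)
      with w0 show False by simp
    qed
    define u where "u r = Re (x r)" for r
    define v where "v r = Im (x r)" for r
    define Q where "Q = (\<Sum>r<m. \<Sum>s<m. u r * L$$(r,s) * u s) + (\<Sum>r<m. \<Sum>s<m. v r * L$$(r,s) * v s)"
    define R where "R = (\<Sum>r<m. (u r)^2 + (v r)^2)"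
    have qsum: "(\<Sum>r<m. cnj (x r) * Lx r) = (\<Sum>r<m. \<Sum>s<m. complex_of_real (L$$(r,s)) * (cnj (x r) * x s))"
      unfolding Lx_def by (simp add: sum_distrib_left mult_ac)
    have reQ: "Re (\<Sum>r<m. cnj (x r) * Lx r) = Q"
      unfolding qsum Q_def u_def v_def by (simp add: sum.distrib[symmetric] algebra_simps)
    have imQ: "Im (\<Sum>r<m. cnj (x r) * Lx r) = 0"
    proof -
      have "Im (\<Sum>r<m. cnj (x r) * Lx r) = (\<Sum>r<m. \<Sum>s<m. L$$(r,s) * (u r * v s)) - (\<Sum>r<m. \<Sum>s<m. L$$(r,s) * (v r * u s))"
        unfolding qsum u_def v_def by (simp add: sum_subtractf[symmetric] algebra_simps)
      also have "(\<Sum>r<m. \<Sum>s<m. L$$(r,s) * (v r * u s)) = (\<Sum>s<m. \<Sum>r<m. L$$(r,s) * (v r * u s))"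
        by (rule sum.swap)
      also have "\<dots> = (\<Sum>r<m. \<Sum>s<m. L$$(r,s) * (u r * v s))"
        by (intro sum.cong refl) (simp add: sym mult_ac)
      finally show ?thesis by simp
    qed
    have qeq: "(\<Sum>r<m. cnj (x r) * Lx r) = complex_of_real Q"
      using reQ imQ by (simp add: complex_eq_iff)
    have Qpos: "Q > 0"
    proof -
      have nn: "(\<Sum>r<m. \<Sum>s<m. f r * L$$(r,s) * f s) \<ge> 0" for f
      proof (cases "\<exists>r<m. f r \<noteq> 0")
        case True thus ?thesis using pd[OF True] by simp
      next
        case False thus ?thesis by simp
      qed
      from xnz obtain r where r: "r < m" "x r \<noteq> 0" by auto
      hence "u r \<noteq> 0 \<or> v r \<noteq> 0" unfolding u_def v_def by (simp add: complex_eq_iff)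
      thus ?thesis
      proof
        assume "u r \<noteq> 0"
        hence ex: "\<exists>r<m. u r \<noteq> 0" using r by auto
        show ?thesis using add_pos_nonneg[OF pd[OF ex] nn[of v]] unfolding Q_def .
      next
        assume "v r \<noteq> 0"
        hence ex: "\<exists>r<m. v r \<noteq> 0" using r by auto
        show ?thesis using add_nonneg_pos[OF nn[of u] pd[OF ex]] unfolding Q_def .
      qed
    qed
    have req: "(\<Sum>r<m. cnj (x r) * x r) = complex_of_real R"
      unfolding R_def u_def v_def by (simp add: complex_eq_iff power2_eq_square)
    have Rpos: "R > 0"
    proof -
      from xnz obtain r where r: "r < m" "x r \<noteq> 0" by auto
      hence "(u r)^2 + (v r)^2 > 0" unfolding u_def v_def
        by (simp add: complex_eq_iff sum_power2_gt_zero_iff)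
      moreover have "(\<Sum>r<m. (u r)^2 + (v r)^2) \<ge> (u r)^2 + (v r)^2"
        using r by (intro member_le_sum) auto
      ultimately show ?thesis unfolding R_def by linarith
    qed
    have "(\<Sum>r<m. cnj (x r) * (- kP * Lx r - kI * y r)) = (\<Sum>r<m. cnj (x r) * (z * x r))"
      using eq1 by (intro sum.cong) auto
    hence "- kP * (\<Sum>r<m. cnj (x r) * Lx r) - kI * (\<Sum>r<m. cnj (x r) * y r) = z * (\<Sum>r<m. cnj (x r) * x r)"
      by (simp add: sum_distrib_left sum_subtractf algebra_simps)
    hence "z * (- kP * (\<Sum>r<m. cnj (x r) * Lx r) - kI * (\<Sum>r<m. cnj (x r) * y r)) = z * (z * (\<Sum>r<m. cnj (x r) * x r))"
      by simp
    moreover have "z * (\<Sum>r<m. cnj (x r) * y r) = (\<Sum>r<m. cnj (x r) * Lx r)"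
      using eq2 by (simp add: sum_distrib_left mult_ac)
    ultimately have key: "- kP * z * complex_of_real Q - kI * complex_of_real Q = z * z * complex_of_real R"
      unfolding qeq req by (simp add: algebra_simps)
    have e1: "- kP * Re z * Q - kI * Q = (Re z * Re z - Im z * Im z) * R"
      using arg_cong[OF key, of Re] by simp
    have e2: "- kP * Im z * Q = 2 * Re z * Im z * R"
      using arg_cong[OF key, of Im] by simp
    show "Re z < 0"
    proof (cases "Im z = 0")
      case True
      show ?thesis
      proof (rule ccontr)
        assume "\<not> Re z < 0"
        hence "Re z \<ge> 0" by simp
        have a: "kP * Re z * Q \<ge> 0" using \<open>Re z \<ge> 0\<close> kP Qpos by simp
        have b: "kI * Q > 0" using kI Qpos by simp
        have c: "Re z * Re z * R \<ge> 0" using Rpos by simp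
        from e1 True a b c show False by simp
      qed
    next
      case False
      have "(- kP * Q) * Im z = (2 * Re z * R) * Im z" using e2 by (simp add: algebra_simps)
      hence "- kP * Q = 2 * Re z * R" using False by (metis mult_right_cancel)
      moreover have "kP * Q > 0" using kP Qpos by simp
      ultimately have "Re z * R < 0" by simp
      thus ?thesis using Rpos by (simp add: mult_less_0_iff)
    qed
  qed
qed

theorem lemma3:
  fixes n d nl :: nat and E :: "(nat \<times> nat) set"
    and g :: "nat \<Rightarrow> nat \<Rightarrow> nat \<Rightarrow> real" and pstar :: "nat \<Rightarrow> nat \<Rightarrow> real"
    and kP kI :: real
  assumes "n \<ge> 2" and "d \<ge> 2"
    and "undirected_graph n E"
    and "2 \<le> nl" and "nl \<le> n"
    and "no_coinciding n d pstar"
    and "\<forall>(i,j)\<in>E. \<forall>c<d. g i j c = bearing d pstar i j c"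
    and "inf_bearing_rigid n d E pstar"
    and "kP > 0" and "kI > 0"
  shows "hurwitz (four_block_mat
            ((- kP) \<cdot>\<^sub>m L_ff n nl d E g) ((- kI) \<cdot>\<^sub>m 1\<^sub>m (d*(n-nl)))
            (L_ff n nl d E g) (0\<^sub>m (d*(n-nl)) (d*(n-nl))))"
proof (rule hurwitz_block[OF Lff_dim])
  have d: "d > 0" using assms(2) by simp
  have Esym: "\<And>i j. (i,j)\<in>E \<Longrightarrow> (j,i)\<in>E" using assms(3) unfolding undirected_graph_def by auto
  have gE: "\<And>i j c. (i,j)\<in>E \<Longrightarrow> c < d \<Longrightarrow> g i j c = bearing d pstar i j c" using assms(7) by auto
  show "L_ff n nl d E g $$ (r,s) = L_ff n nl d E g $$ (s,r)" if "r < d*(n-nl)" "s < d*(n-nl)" for r s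
    using Lff_entry[OF d that assms(5)] Lff_entry[OF d that(2) that(1) assms(5)]
      Lb_sym[OF Esym gE, of "r mod d" "s mod d"] d by simp
  show "(\<Sum>r<d*(n-nl). \<Sum>s<d*(n-nl). u r * L_ff n nl d E g $$ (r,s) * u s) > 0"
    if "\<exists>r<d*(n-nl). u r \<noteq> 0" for u
    by (rule Lff_pd[OF d assms(3) assms(4) assms(5) assms(6) assms(7) assms(8) that])
qed (use assms in auto)

end
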